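(* Let $n\ge1$, $\eta>0$, $C\in\mathbb{R}_+^{n\times n}$, $q'\in\Delta_n$ and $p'\in\Delta_n$ with all entries positive. For $i=1,\dots,n$ define $\phi_i:\mathbb{R}^n\to\mathbb{R}$ by $$\phi_i(\lambda)=np_i'\Big[-\langle q',\lambda\rangle-\eta\log p_i'+\eta\log\Big(\sum_{j=1}^n\exp((\lambda_j-C_{i,j}-\eta)/\eta)\Big)+\eta\Big].$$ Then $\phi_i$ is $\frac{np_i'}{\eta}$-smooth w.r.t. $\|\cdot\|_2$ and $\frac{5np_i'}{\eta}$-smooth w.r.t. $\|\cdot\|_\infty$.
   Context: $\Delta_n=\{a\in\mathbb{R}_+^n: a^T\mathbf 1=1\}$. A convex differentiable function $g$ is $\beta$-smooth w.r.t. a norm $\|\cdot\|_H$ if $\|\nabla g(x)-\nabla g(y)\|_{H,*}\le\beta\|x-y\|_H$ for all $x,y$, where $\|u\|_{H,*}=\max\{\langle u,v\rangle:\|v\|_H\le1\}$ (so the dual norm of $\|\cdot\|_\infty$ is $\|\cdot\|_1$). *)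

theory Defs
  imports "HOL-Analysis.Analysis"
begin

definition dual_norm :: "('a::real_inner \<Rightarrow> real) \<Rightarrow> 'a \<Rightarrow> real" where
  "dual_norm N u = Sup {u \<bullet> v | v. N v \<le> 1}"

definition beta_smooth_wrt ::
  "('a::euclidean_space \<Rightarrow> real) \<Rightarrow> real \<Rightarrow> ('a \<Rightarrow> real) \<Rightarrow> bool" where
  "beta_smooth_wrt N \<beta> g \<longleftrightarrow>
     convex_on UNIV g \<and>
     (\<exists>G. (\<forall>x. (g has_derivative (\<lambda>h. G x \<bullet> h)) (at x)) \<and>
          (\<forall>x y. dual_norm N (G x - G y) \<le> \<beta> * N (x - y)))"

definition prob_simplex :: "(real^'n) set" where
  "prob_simplex = {a. (\<forall>i. a $ i \<ge> 0) \<and> (\<Sum>i\<in>UNIV. a $ i) = 1}"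

text \<open>The function phi_i; n = CARD('n).\<close>
definition phi :: "real \<Rightarrow> real^'n^'n \<Rightarrow> real^'n \<Rightarrow> real^'n \<Rightarrow> 'n \<Rightarrow> real^'n \<Rightarrow> real" where
  "phi \<eta> C q p i l =
     real CARD('n) * p $ i *
       (- (q \<bullet> l) - \<eta> * ln (p $ i)
        + \<eta> * ln (\<Sum>j\<in>UNIV. exp ((l $ j - C $ i $ j - \<eta>) / \<eta>)) + \<eta>)"

end

theory Submission
  imports Defs
begin

lemma lse_convex:
  fixes a b :: "'n::finite \<Rightarrow> real" and t :: real
  assumes t: "0 \<le> t" "t \<le> 1"
  shows "ln (\<Sum>j\<in>UNIV. exp ((1-t)*a j + t*b j)) \<le> (1-t)*ln (\<Sum>j\<in>UNIV. exp (a j)) + t*ln (\<Sum>j\<in>UNIV. exp (b j))"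
proof -
  define A where "A = (\<Sum>j\<in>UNIV. exp (a j))"
  define B where "B = (\<Sum>j\<in>UNIV. exp (b j))"
  have A: "A > 0" unfolding A_def by (intro sum_pos) auto
  have B: "B > 0" unfolding B_def by (intro sum_pos) auto
  define M where "M = exp ((1-t)*ln A + t*ln B)"
  have M: "M > 0" unfolding M_def by simp
  have pt: "exp ((1-t)*a j + t*b j) / M \<le> (1-t) * (exp (a j) / A) + t * (exp (b j) / B)" for j
  proof -
    have "exp ((1-t)*(a j - ln A) + t*(b j - ln B)) \<le> (1-t) * exp (a j - ln A) + t * exp (b j - ln B)"
      using convex_onD[OF exp_convex, of t "a j - ln A" "b j - ln B"] t by simp
    moreover have "exp ((1-t)*(a j - ln A) + t*(b j - ln B)) = exp ((1-t)*a j + t*b j) / M"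
      unfolding M_def by (simp add: exp_diff[symmetric] algebra_simps)
    moreover have "exp (a j - ln A) = exp (a j) / A" "exp (b j - ln B) = exp (b j) / B"
      using A B by (simp_all add: exp_diff)
    ultimately show ?thesis by simp
  qed
  have "(\<Sum>j\<in>UNIV. exp ((1-t)*a j + t*b j)) / M \<le> (\<Sum>j\<in>UNIV. (1-t) * (exp (a j) / A) + t * (exp (b j) / B))"
    unfolding sum_divide_distrib by (intro sum_mono pt)
  also have "\<dots> = (1-t) * (A / A) + t * (B / B)"
    by (simp add: sum.distrib sum_distrib_left[symmetric] sum_divide_distrib[symmetric] A_def B_def)
  also have "\<dots> = 1" using A B by simp
  finally have "(\<Sum>j\<in>UNIV. exp ((1-t)*a j + t*b j)) \<le> M" using M by simp
  moreover have "(\<Sum>j\<in>UNIV. exp ((1-t)*a j + t*b j)) > 0" by (intro sum_pos) auto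
  ultimately have "ln (\<Sum>j\<in>UNIV. exp ((1-t)*a j + t*b j)) \<le> ln M" by simp
  thus ?thesis unfolding M_def A_def B_def by simp
qed

lemma cov_mvt:
  fixes a b w :: "'n::finite \<Rightarrow> real"
  shows "\<exists>s. (\<forall>j. s j > 0) \<and> sum s UNIV = 1 \<and>
    (\<Sum>j\<in>UNIV. w j * (exp (a j + b j) / (\<Sum>k\<in>UNIV. exp (a k + b k)) - exp (a j) / (\<Sum>k\<in>UNIV. exp (a k))))
    = (\<Sum>j\<in>UNIV. s j * w j * b j) - (\<Sum>j\<in>UNIV. s j * w j) * (\<Sum>j\<in>UNIV. s j * b j)"
proof -
  define E where "E t j = exp (a j + t * b j)" for t j
  define Z where "Z t = (\<Sum>k\<in>UNIV. E t k)" for t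
  have Zp: "Z t > 0" for t unfolding Z_def E_def by (intro sum_pos) auto
  define h where "h t = (\<Sum>j\<in>UNIV. w j * E t j) / Z t" for t
  define h' where "h' t = ((\<Sum>j\<in>UNIV. w j * (b j * E t j)) * Z t - (\<Sum>j\<in>UNIV. w j * E t j) * (\<Sum>j\<in>UNIV. b j * E t j)) / (Z t)^2" for t
  have der: "DERIV h t :> h' t" for t
  proof -
    have "DERIV (\<lambda>t. (\<Sum>j\<in>UNIV. w j * exp (a j + t * b j)) / (\<Sum>k\<in>UNIV. exp (a k + t * b k))) t :> h' t"
      apply (rule derivative_eq_intros refl)+
      using Zp[of t] apply (simp add: Z_def E_def)
      using Zp[of t] by (simp add: h'_def Z_def E_def power2_eq_square mult.commute mult.left_commute sum_distrib_left)
    thus ?thesis unfolding h_def Z_def E_def .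
  qed
  obtain z where "h 1 - h 0 = h' z" using MVT2[of 0 1 h h'] der by auto
  define s where "s j = E z j / Z z" for j
  have "s j > 0" for j unfolding s_def using Zp[of z] by (simp add: E_def)
  moreover have "sum s UNIV = 1" unfolding s_def using Zp[of z] by (simp add: sum_divide_distrib[symmetric] Z_def)
  moreover have "h 1 - h 0 = (\<Sum>j\<in>UNIV. w j * (exp (a j + b j) / (\<Sum>k\<in>UNIV. exp (a k + b k)) - exp (a j) / (\<Sum>k\<in>UNIV. exp (a k))))"
    by (simp add: h_def E_def Z_def right_diff_distrib sum_subtractf sum_divide_distrib)
  moreover have "h' z = (\<Sum>j\<in>UNIV. s j * w j * b j) - (\<Sum>j\<in>UNIV. s j * w j) * (\<Sum>j\<in>UNIV. s j * b j)"
    using Zp[of z] unfolding h'_def s_def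
    by (simp add: sum_divide_distrib[symmetric] diff_divide_distrib power2_eq_square algebra_simps)
  ultimately show ?thesis by (metis \<open>h 1 - h 0 = h' z\<close>)
qed

lemma cov_l2:
  fixes s w v :: "'n::finite \<Rightarrow> real"
  assumes s: "\<And>j. s j > 0" "sum s UNIV = 1"
  shows "\<bar>(\<Sum>j\<in>UNIV. s j * w j * v j) - (\<Sum>j\<in>UNIV. s j * w j) * (\<Sum>j\<in>UNIV. s j * v j)\<bar>
     \<le> sqrt (\<Sum>j\<in>UNIV. (w j)\<^sup>2) * sqrt (\<Sum>j\<in>UNIV. (v j)\<^sup>2)"
proof -
  define m where "m = (\<Sum>j\<in>UNIV. s j * v j)"
  have sle: "s j \<le> 1" for j using s member_le_sum[of j UNIV s] by (simp add: less_imp_le)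
  have cov: "(\<Sum>j\<in>UNIV. s j * w j * v j) - (\<Sum>j\<in>UNIV. s j * w j) * m
      = (\<Sum>j\<in>UNIV. (sqrt (s j) * w j) * (sqrt (s j) * (v j - m)))"
    using s(1) by (simp add: algebra_simps sum_subtractf sum_distrib_right sum_distrib_left less_imp_le)
  have "(\<Sum>j\<in>UNIV. (sqrt (s j) * w j) * (sqrt (s j) * (v j - m)))\<^sup>2
     \<le> (\<Sum>j\<in>UNIV. (sqrt (s j) * w j)\<^sup>2) * (\<Sum>j\<in>UNIV. (sqrt (s j) * (v j - m))\<^sup>2)"
    by (rule Cauchy_Schwarz_ineq_sum)
  also have "(\<Sum>j\<in>UNIV. (sqrt (s j) * w j)\<^sup>2) = (\<Sum>j\<in>UNIV. s j * (w j)\<^sup>2)"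
    using s(1) by (simp add: power_mult_distrib less_imp_le)
  also have "(\<Sum>j\<in>UNIV. (sqrt (s j) * (v j - m))\<^sup>2) = (\<Sum>j\<in>UNIV. s j * (v j)\<^sup>2) - m\<^sup>2"
  proof -
    have "(\<Sum>j\<in>UNIV. (sqrt (s j) * (v j - m))\<^sup>2) = (\<Sum>j\<in>UNIV. s j * (v j)\<^sup>2 - 2 * m * (s j * v j) + m\<^sup>2 * s j)"
      using s(1) by (intro sum.cong) (auto simp: power_mult_distrib less_imp_le power2_diff algebra_simps)
    also have "\<dots> = (\<Sum>j\<in>UNIV. s j * (v j)\<^sup>2) - 2 * m * m + m\<^sup>2 * 1"
      unfolding sum.distrib sum_subtractf sum_distrib_left[symmetric] m_def[symmetric] s(2) by simp
    finally show ?thesis by (simp add: power2_eq_square)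
  qed
  also have "(\<Sum>j\<in>UNIV. s j * (w j)\<^sup>2) * ((\<Sum>j\<in>UNIV. s j * (v j)\<^sup>2) - m\<^sup>2)
      \<le> (\<Sum>j\<in>UNIV. (w j)\<^sup>2) * (\<Sum>j\<in>UNIV. (v j)\<^sup>2)"
  proof (rule mult_mono)
    show "(\<Sum>j\<in>UNIV. s j * (w j)\<^sup>2) \<le> (\<Sum>j\<in>UNIV. (w j)\<^sup>2)"
      by (intro sum_mono mult_left_le_one_le) (use sle s(1) in \<open>auto simp: less_imp_le\<close>)
    show "(\<Sum>j\<in>UNIV. s j * (v j)\<^sup>2) - m\<^sup>2 \<le> (\<Sum>j\<in>UNIV. (v j)\<^sup>2)"
    proof -
      have "(\<Sum>j\<in>UNIV. s j * (v j)\<^sup>2) \<le> (\<Sum>j\<in>UNIV. (v j)\<^sup>2)"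
        by (intro sum_mono mult_left_le_one_le) (use sle s(1) in \<open>auto simp: less_imp_le\<close>)
      thus ?thesis by (smt (verit) zero_le_power2)
    qed
    show "0 \<le> (\<Sum>j\<in>UNIV. (w j)\<^sup>2)" by (simp add: sum_nonneg)
    show "0 \<le> (\<Sum>j\<in>UNIV. s j * (v j)\<^sup>2) - m\<^sup>2"
    proof -
      have "m\<^sup>2 = (\<Sum>j\<in>UNIV. sqrt (s j) * (sqrt (s j) * v j))\<^sup>2"
        unfolding m_def using s(1) by (simp add: mult.assoc[symmetric] less_imp_le)
      also have "\<dots> \<le> (\<Sum>j\<in>UNIV. (sqrt (s j))\<^sup>2) * (\<Sum>j\<in>UNIV. (sqrt (s j) * v j)\<^sup>2)"
        by (rule Cauchy_Schwarz_ineq_sum)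
      also have "\<dots> = (\<Sum>j\<in>UNIV. s j * (v j)\<^sup>2)"
        using s by (simp add: power_mult_distrib less_imp_le)
      finally show ?thesis by simp
    qed
  qed
  finally have sq: "((\<Sum>j\<in>UNIV. s j * w j * v j) - (\<Sum>j\<in>UNIV. s j * w j) * m)\<^sup>2
     \<le> (\<Sum>j\<in>UNIV. (w j)\<^sup>2) * (\<Sum>j\<in>UNIV. (v j)\<^sup>2)" unfolding cov .
  have "\<bar>(\<Sum>j\<in>UNIV. s j * w j * v j) - (\<Sum>j\<in>UNIV. s j * w j) * m\<bar>
      = sqrt (((\<Sum>j\<in>UNIV. s j * w j * v j) - (\<Sum>j\<in>UNIV. s j * w j) * m)\<^sup>2)" by simp
  also have "\<dots> \<le> sqrt ((\<Sum>j\<in>UNIV. (w j)\<^sup>2) * (\<Sum>j\<in>UNIV. (v j)\<^sup>2))"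
    using sq real_sqrt_le_mono by blast
  finally show ?thesis unfolding m_def by (simp add: real_sqrt_mult)
qed

lemma cov_inf:
  fixes s w v :: "'n::finite \<Rightarrow> real"
  assumes s: "\<And>j. s j > 0" "sum s UNIV = 1"
    and w: "\<And>j. \<bar>w j\<bar> \<le> 1" and v: "\<And>j. \<bar>v j\<bar> \<le> M"
  shows "\<bar>(\<Sum>j\<in>UNIV. s j * w j * v j) - (\<Sum>j\<in>UNIV. s j * w j) * (\<Sum>j\<in>UNIV. s j * v j)\<bar> \<le> 2 * M"
proof -
  define m where "m = (\<Sum>j\<in>UNIV. s j * v j)"
  have mM: "\<bar>m\<bar> \<le> M"
  proof -
    have "\<bar>m\<bar> \<le> (\<Sum>j\<in>UNIV. \<bar>s j * v j\<bar>)" unfolding m_def by (rule sum_abs)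
    also have "\<dots> \<le> (\<Sum>j\<in>UNIV. s j * M)"
      using s(1) v by (intro sum_mono) (simp add: abs_mult mult_left_mono less_imp_le)
    also have "\<dots> = M" using s(2) by (simp add: sum_distrib_right[symmetric])
    finally show ?thesis .
  qed
  have cov: "(\<Sum>j\<in>UNIV. s j * w j * v j) - (\<Sum>j\<in>UNIV. s j * w j) * m
      = (\<Sum>j\<in>UNIV. s j * w j * (v j - m))"
    by (simp add: algebra_simps sum_subtractf sum_distrib_right sum_distrib_left)
  have "\<bar>\<Sum>j\<in>UNIV. s j * w j * (v j - m)\<bar> \<le> (\<Sum>j\<in>UNIV. \<bar>s j * w j * (v j - m)\<bar>)" by (rule sum_abs)
  also have "\<dots> \<le> (\<Sum>j\<in>UNIV. s j * (2 * M))"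
  proof (intro sum_mono)
    fix j
    have "\<bar>w j * (v j - m)\<bar> \<le> 1 * (2 * M)"
      unfolding abs_mult using w[of j] v[of j] mM
      by (intro mult_mono) (auto)
    thus "\<bar>s j * w j * (v j - m)\<bar> \<le> s j * (2 * M)"
      using s(1)[of j] by (simp add: abs_mult mult.assoc mult_left_mono less_imp_le)
  qed
  also have "\<dots> = 2 * M" using s(2) by (simp add: sum_distrib_right[symmetric])
  finally show ?thesis unfolding m_def[symmetric] cov .
qed


lemma vec_nth_has_derivative [derivative_intros]:
  "((\<lambda>x::real^'n. x $ j) has_derivative (\<lambda>h. h $ j)) F"
  by (rule bounded_linear_imp_has_derivative[OF bounded_linear_vec_nth])

theorem lemma1:
  fixes \<eta> :: real and C :: "real^'n^'n" and q p :: "real^'n" and i :: 'n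
  assumes "\<eta> > 0"
    and "\<forall>a b. C $ a $ b \<ge> 0"
    and "q \<in> prob_simplex" and "p \<in> prob_simplex"
    and "\<forall>j. q $ j > 0" and "\<forall>j. p $ j > 0"
  shows "beta_smooth_wrt norm (real CARD('n) * p $ i / \<eta>) (phi \<eta> C q p i)
       \<and> beta_smooth_wrt infnorm (5 * real CARD('n) * p $ i / \<eta>) (phi \<eta> C q p i)"
proof -
  note eta = \<open>\<eta> > 0\<close>
  define K where "K = real CARD('n) * p $ i"
  have K: "K > 0" unfolding K_def using assms(6) by simp
  define z where "z l j = (l $ j - C $ i $ j - \<eta>) / \<eta>" for l :: "real^'n" and j
  define S where "S l j = exp (z l j) / (\<Sum>k\<in>UNIV. exp (z l k))" for l j
  define G where "G l = (\<chi> j. K * (S l j - q $ j))" for l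
  have Zpos: "0 < (\<Sum>j\<in>UNIV. exp ((l $ j - C $ i $ j - \<eta>) / \<eta>))" for l
    by (intro sum_pos) auto
  have ne: "\<eta> \<noteq> 0" using eta by simp
  have deriv: "(phi \<eta> C q p i has_derivative (\<lambda>h. G l \<bullet> h)) (at l)" for l
  proof -
    have "((\<lambda>l. K * (- (q \<bullet> l) - \<eta> * ln (p $ i) + \<eta> * ln (\<Sum>j\<in>UNIV. exp ((l $ j - C $ i $ j - \<eta>) / \<eta>)) + \<eta>))
      has_derivative (\<lambda>h. K * (- (q \<bullet> h) + \<eta> * ((\<Sum>j\<in>UNIV. exp ((l $ j - C $ i $ j - \<eta>) / \<eta>) * (h $ j / \<eta>)) / (\<Sum>j\<in>UNIV. exp ((l $ j - C $ i $ j - \<eta>) / \<eta>)))))) (at l)"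
      apply (rule derivative_eq_intros refl | rule Zpos | rule ne)+
      apply (rule ext)
      apply (simp add: ne divide_inverse sum_distrib_left sum_distrib_right mult.commute mult.left_commute)
      done
    moreover have "phi \<eta> C q p i = (\<lambda>l. K * (- (q \<bullet> l) - \<eta> * ln (p $ i) + \<eta> * ln (\<Sum>j\<in>UNIV. exp ((l $ j - C $ i $ j - \<eta>) / \<eta>)) + \<eta>))"
      by (rule ext) (simp add: phi_def K_def)
    moreover have "(\<lambda>h. G l \<bullet> h) = (\<lambda>h. K * (- (q \<bullet> h) + \<eta> * ((\<Sum>j\<in>UNIV. exp ((l $ j - C $ i $ j - \<eta>) / \<eta>) * (h $ j / \<eta>)) / (\<Sum>j\<in>UNIV. exp ((l $ j - C $ i $ j - \<eta>) / \<eta>)))))"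
    proof (rule ext)
      fix h :: "real^'n"
      have "G l \<bullet> h = K * ((\<Sum>j\<in>UNIV. S l j * h $ j) - q \<bullet> h)"
        by (simp add: G_def inner_vec_def algebra_simps sum_subtractf sum_distrib_left)
      moreover have "(\<Sum>j\<in>UNIV. S l j * h $ j) = \<eta> * ((\<Sum>j\<in>UNIV. exp ((l $ j - C $ i $ j - \<eta>) / \<eta>) * (h $ j / \<eta>)) / (\<Sum>j\<in>UNIV. exp ((l $ j - C $ i $ j - \<eta>) / \<eta>)))"
      proof -
        have "(\<Sum>j\<in>UNIV. S l j * h $ j) = (\<Sum>j\<in>UNIV. \<eta> * (exp ((l $ j - C $ i $ j - \<eta>) / \<eta>) * (h $ j / \<eta>)) / (\<Sum>j\<in>UNIV. exp ((l $ j - C $ i $ j - \<eta>) / \<eta>)))"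
          by (rule sum.cong) (use ne in \<open>auto simp: S_def z_def\<close>)
        also have "\<dots> = \<eta> * (\<Sum>j\<in>UNIV. exp ((l $ j - C $ i $ j - \<eta>) / \<eta>) * (h $ j / \<eta>)) / (\<Sum>j\<in>UNIV. exp ((l $ j - C $ i $ j - \<eta>) / \<eta>))"
          by (simp add: sum_divide_distrib[symmetric] sum_distrib_left[symmetric])
        finally show ?thesis by simp
      qed
      ultimately show "G l \<bullet> h = K * (- (q \<bullet> h) + \<eta> * ((\<Sum>j\<in>UNIV. exp ((l $ j - C $ i $ j - \<eta>) / \<eta>) * (h $ j / \<eta>)) / (\<Sum>j\<in>UNIV. exp ((l $ j - C $ i $ j - \<eta>) / \<eta>))))"
        by simp
    qed
    ultimately show ?thesis by simp
  qed
  define F where "F l = - (q \<bullet> l) - \<eta> * ln (p $ i) + \<eta> * ln (\<Sum>j\<in>UNIV. exp (z l j)) + \<eta>" for l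
  have phiF: "phi \<eta> C q p i = (\<lambda>l. K * F l)"
    by (rule ext) (simp add: phi_def K_def F_def z_def)
  have conv: "convex_on UNIV (phi \<eta> C q p i)"
  proof (rule convex_onI)
    fix t :: real and x y :: "real^'n"
    assume t: "0 < t" "t < 1"
    have zc: "z ((1 - t) *\<^sub>R x + t *\<^sub>R y) j = (1 - t) * z x j + t * z y j" for j
      using eta by (simp add: z_def field_simps)
    have "ln (\<Sum>j\<in>UNIV. exp (z ((1 - t) *\<^sub>R x + t *\<^sub>R y) j)) \<le> (1-t) * ln (\<Sum>j\<in>UNIV. exp (z x j)) + t * ln (\<Sum>j\<in>UNIV. exp (z y j))"
      unfolding zc using lse_convex[of t "z x" "z y"] t by simp
    hence "\<eta> * ln (\<Sum>j\<in>UNIV. exp (z ((1 - t) *\<^sub>R x + t *\<^sub>R y) j)) \<le> \<eta> * ((1-t) * ln (\<Sum>j\<in>UNIV. exp (z x j)) + t * ln (\<Sum>j\<in>UNIV. exp (z y j)))"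
      using eta by (simp add: mult_left_mono)
    moreover have ql: "q \<bullet> ((1 - t) *\<^sub>R x + t *\<^sub>R y) = (1 - t) * (q \<bullet> x) + t * (q \<bullet> y)"
      by (simp add: inner_add_right)
    moreover have "(1 - t) * F x + t * F y = - ((1 - t) * (q \<bullet> x) + t * (q \<bullet> y)) - \<eta> * ln (p $ i)
       + \<eta> * ((1-t) * ln (\<Sum>j\<in>UNIV. exp (z x j)) + t * ln (\<Sum>j\<in>UNIV. exp (z y j))) + \<eta>"
      unfolding F_def by algebra
    ultimately have "F ((1 - t) *\<^sub>R x + t *\<^sub>R y) \<le> (1 - t) * F x + t * F y"
      unfolding F_def by linarith
    hence "K * F ((1 - t) *\<^sub>R x + t *\<^sub>R y) \<le> K * ((1 - t) * F x + t * F y)"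
      using K by (intro mult_left_mono) auto
    moreover have "K * ((1 - t) * F x + t * F y) = (1 - t) * (K * F x) + t * (K * F y)" by algebra
    ultimately show "phi \<eta> C q p i ((1 - t) *\<^sub>R x + t *\<^sub>R y) \<le> (1 - t) * phi \<eta> C q p i x + t * phi \<eta> C q p i y"
      unfolding phiF by linarith
  qed (rule convex_UNIV)
  have covrep: "\<exists>s. (\<forall>j. s j > 0) \<and> sum s UNIV = 1 \<and> (G x - G y) \<bullet> w = K / \<eta> *
      ((\<Sum>j\<in>UNIV. s j * w $ j * (x - y) $ j) - (\<Sum>j\<in>UNIV. s j * w $ j) * (\<Sum>j\<in>UNIV. s j * (x - y) $ j))" for x y w
  proof -
    obtain s where s: "\<forall>j. s j > 0" "sum s UNIV = 1"
      and eq: "(\<Sum>j\<in>UNIV. w $ j * (exp (z y j + (x $ j - y $ j) / \<eta>) / (\<Sum>k\<in>UNIV. exp (z y k + (x $ k - y $ k) / \<eta>)) - exp (z y j) / (\<Sum>k\<in>UNIV. exp (z y k))))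
        = (\<Sum>j\<in>UNIV. s j * w $ j * ((x $ j - y $ j) / \<eta>)) - (\<Sum>j\<in>UNIV. s j * w $ j) * (\<Sum>j\<in>UNIV. s j * ((x $ j - y $ j) / \<eta>))"
      using cov_mvt[where a="z y" and b="\<lambda>j. (x $ j - y $ j) / \<eta>" and w="\<lambda>j. w $ j"] by (elim exE conjE) (rule that)
    have zz: "z y j + (x $ j - y $ j) / \<eta> = z x j" for j
      using eta by (simp add: z_def field_simps)
    have "(G x - G y) \<bullet> w = K * (\<Sum>j\<in>UNIV. w $ j * (S x j - S y j))"
      by (simp add: G_def inner_vec_def algebra_simps sum_distrib_left)
    also have "\<dots> = K * ((\<Sum>j\<in>UNIV. s j * w $ j * ((x $ j - y $ j) / \<eta>)) - (\<Sum>j\<in>UNIV. s j * w $ j) * (\<Sum>j\<in>UNIV. s j * ((x $ j - y $ j) / \<eta>)))"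
      using eq unfolding zz S_def by simp
    also have "\<dots> = K / \<eta> * ((\<Sum>j\<in>UNIV. s j * w $ j * (x - y) $ j) - (\<Sum>j\<in>UNIV. s j * w $ j) * (\<Sum>j\<in>UNIV. s j * (x - y) $ j))"
    proof -
      have a1: "(\<Sum>j\<in>UNIV. s j * w $ j * ((x $ j - y $ j) / \<eta>)) = (\<Sum>j\<in>UNIV. s j * w $ j * (x - y) $ j) / \<eta>"
        by (simp add: sum_divide_distrib)
      have a2: "(\<Sum>j\<in>UNIV. s j * ((x $ j - y $ j) / \<eta>)) = (\<Sum>j\<in>UNIV. s j * (x - y) $ j) / \<eta>"
        by (simp add: sum_divide_distrib)
      show ?thesis unfolding a1 a2 using ne by (simp add: field_simps)
    qed
    finally have eqG: "(G x - G y) \<bullet> w = K / \<eta> * ((\<Sum>j\<in>UNIV. s j * w $ j * (x - y) $ j) - (\<Sum>j\<in>UNIV. s j * w $ j) * (\<Sum>j\<in>UNIV. s j * (x - y) $ j))" .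
    show ?thesis
      apply (rule exI[of _ s])
      using s eqG by simp
  qed
  have Keta: "K / \<eta> > 0" using K eta by simp
  have d2: "dual_norm norm (G x - G y) \<le> (real CARD('n) * p $ i / \<eta>) * norm (x - y)" for x y
    unfolding dual_norm_def
  proof (rule cSup_least)
    show "{(G x - G y) \<bullet> v |v. norm v \<le> 1} \<noteq> {}" by (auto intro!: exI[of _ 0])
    fix r assume "r \<in> {(G x - G y) \<bullet> v |v. norm v \<le> 1}"
    then obtain w where r: "r = (G x - G y) \<bullet> w" and w: "norm w \<le> (1::real)" by auto
    obtain s where s: "\<forall>j. s j > 0" "sum s UNIV = 1" and eq: "(G x - G y) \<bullet> w = K / \<eta> *
      ((\<Sum>j\<in>UNIV. s j * w $ j * (x - y) $ j) - (\<Sum>j\<in>UNIV. s j * w $ j) * (\<Sum>j\<in>UNIV. s j * (x - y) $ j))"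
      using covrep[where x=x and y=y and w=w] by (elim exE conjE) (rule that)
    have nrm: "sqrt (\<Sum>j\<in>UNIV. (u $ j)\<^sup>2) = norm u" for u :: "real^'n"
      by (simp add: norm_vec_def L2_set_def)
    have "\<bar>(\<Sum>j\<in>UNIV. s j * w $ j * (x - y) $ j) - (\<Sum>j\<in>UNIV. s j * w $ j) * (\<Sum>j\<in>UNIV. s j * (x - y) $ j)\<bar>
       \<le> norm w * norm (x - y)"
      using cov_l2[of s "\<lambda>j. w $ j" "\<lambda>j. (x - y) $ j"] s unfolding nrm by simp
    also have "\<dots> \<le> norm (x - y)" using w by (simp add: mult_left_le_one_le)
    finally have "r \<le> K / \<eta> * norm (x - y)"
      unfolding r eq using Keta by (smt (verit) mult_left_mono abs_le_D1)
    thus "r \<le> (real CARD('n) * p $ i / \<eta>) * norm (x - y)" by (simp add: K_def)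
  qed
  have dinf: "dual_norm infnorm (G x - G y) \<le> (5 * real CARD('n) * p $ i / \<eta>) * infnorm (x - y)" for x y
    unfolding dual_norm_def
  proof (rule cSup_least)
    show "{(G x - G y) \<bullet> v |v. infnorm v \<le> 1} \<noteq> {}" by (auto intro!: exI[of _ 0] simp: infnorm_0)
    fix r assume "r \<in> {(G x - G y) \<bullet> v |v. infnorm v \<le> 1}"
    then obtain w where r: "r = (G x - G y) \<bullet> w" and w: "infnorm w \<le> (1::real)" by auto
    obtain s where s: "\<forall>j. s j > 0" "sum s UNIV = 1" and eq: "(G x - G y) \<bullet> w = K / \<eta> *
      ((\<Sum>j\<in>UNIV. s j * w $ j * (x - y) $ j) - (\<Sum>j\<in>UNIV. s j * w $ j) * (\<Sum>j\<in>UNIV. s j * (x - y) $ j))"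
      using covrep[where x=x and y=y and w=w] by (elim exE conjE) (rule that)
    have "\<bar>(\<Sum>j\<in>UNIV. s j * w $ j * (x - y) $ j) - (\<Sum>j\<in>UNIV. s j * w $ j) * (\<Sum>j\<in>UNIV. s j * (x - y) $ j)\<bar>
       \<le> 2 * infnorm (x - y)"
      using cov_inf[of s "\<lambda>j. w $ j" "\<lambda>j. (x - y) $ j" "infnorm (x - y)"] s
        component_le_infnorm_cart[of w] component_le_infnorm_cart[of "x - y"] w
      by (meson order_trans)
    also have "\<dots> \<le> 5 * infnorm (x - y)" by (simp add: infnorm_pos_le)
    finally have "r \<le> K / \<eta> * (5 * infnorm (x - y))"
      unfolding r eq using Keta by (smt (verit) mult_left_mono abs_le_D1)
    thus "r \<le> (5 * real CARD('n) * p $ i / \<eta>) * infnorm (x - y)" by (simp add: K_def mult_ac)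
  qed
  show ?thesis unfolding beta_smooth_wrt_def using conv deriv d2 dinf by blast
qed

end
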